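(* Let $0<1/n_0\ll 1/r_1\ll\tau,1/K$ where $\tau<1$, $K\geq 1$ and $1-\tau-7\tau^{1/4}/K>0$, and let $t,n\in\mathbb N$ with $n\geq n_0$. If $\mathcal H$ is an $n$-vertex hypergraph with codegree at most $t$ such that every edge $e$ satisfies $|V(e)|\geq r_1$, then there exists a linear ordering $\preceq$ of the edges of $\mathcal H$ such that at least one of the following holds. (a) Every $e\in\mathcal H$ satisfies $\overleftarrow{d}(e)\leq t(1-\tau)n$. (b) There is a set $\mathcal W\subseteq\mathcal H$ such that (W1) $\max_{e\in\mathcal W}|V(e)|\leq(1+3\tau^{1/4}K^3)\min_{e\in\mathcal W}|V(e)|$ and (W2) $\mathrm{vol}_{\mathcal H}(\mathcal W)\geq t\,\frac{(1-\tau-7\tau^{1/4}/K)^2}{1+3\tau^{1/4}K^3}$; and moreover, if $e^*$ is the last edge of $\mathcal W$ in $\preceq$, then (O1) every $f\in\mathcal H$ with $e^*\preceq f$ and $f\neq e^*$ satisfies $\overleftarrow{d}(f)\leq t(1-\tau)n$, and (O2) all $e,f\in\mathcal H$ with $f\preceq e\preceq e^*$ satisfy $|V(f)|\geq|V(e)|$.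
   Context: Constant hierarchies: a statement holding whenever $0<a\ll b\le 1$ means there is a non-decreasing function $f:(0,1]\to(0,1]$ such that it holds for all $a,b$ with $a\leq f(b)$; longer hierarchies (and hierarchies with several constants on the right) are defined analogously, constants being chosen from right to left. A hypergraph $\mathcal H$ has a finite vertex set $V(\mathcal H)$ and a finite set of edges, each edge $e$ with a nonempty set $V(e)\subseteq V(\mathcal H)$ (multiple edges allowed); $n$-vertex means $|V(\mathcal H)|=n$. The codegree of $\mathcal H$ is the maximum over distinct vertices $u,v$ of the number of edges containing both. For $S\subseteq\mathcal H$, $\mathrm{vol}_{\mathcal H}(S)=\sum_{e\in S}\binom{|V(e)|}{2}/\binom{n}{2}$. For an edge $e$, $N(e)$ is the set of edges $f\neq e$ with $V(e)\cap V(f)\neq\emptyset$. Given a linear ordering $\preceq$ of the edges, $\overleftarrow{d}(e)=|\{f\in N(e): f\preceq e\}|$. *)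

theory Defs
  imports Complex_Main
begin

text \<open>A hypergraph: vertex set VH, edge index set EH (multiple edges allowed,
  since distinct indices may carry the same vertex set), and Ve e = V(e).\<close>

definition hypergraph :: "'v set \<Rightarrow> 'e set \<Rightarrow> ('e \<Rightarrow> 'v set) \<Rightarrow> bool" where
  "hypergraph VH EH Ve \<longleftrightarrow> finite VH \<and> finite EH \<and>
     (\<forall>e\<in>EH. Ve e \<noteq> {} \<and> Ve e \<subseteq> VH)"

definition codegree_le :: "'v set \<Rightarrow> 'e set \<Rightarrow> ('e \<Rightarrow> 'v set) \<Rightarrow> nat \<Rightarrow> bool" where
  "codegree_le VH EH Ve t \<longleftrightarrow>
     (\<forall>u\<in>VH. \<forall>v\<in>VH. u \<noteq> v \<longrightarrow> card {e\<in>EH. u \<in> Ve e \<and> v \<in> Ve e} \<le> t)"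

definition vol :: "'v set \<Rightarrow> ('e \<Rightarrow> 'v set) \<Rightarrow> 'e set \<Rightarrow> real" where
  "vol VH Ve S = (\<Sum>e\<in>S. real (card (Ve e) choose 2)) / real (card VH choose 2)"

definition nbhd :: "'e set \<Rightarrow> ('e \<Rightarrow> 'v set) \<Rightarrow> 'e \<Rightarrow> 'e set" where
  "nbhd EH Ve e = {f\<in>EH. f \<noteq> e \<and> Ve e \<inter> Ve f \<noteq> {}}"

text \<open>Back-degree w.r.t. the ordering R, where (f,e) \<in> R means f \<preceq> e.\<close>
definition back_deg :: "'e set \<Rightarrow> ('e \<Rightarrow> 'v set) \<Rightarrow> ('e \<times> 'e) set \<Rightarrow> 'e \<Rightarrow> nat" where
  "back_deg EH Ve R e = card {f\<in>nbhd EH Ve e. (f, e) \<in> R}"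

definition nondecr2 :: "(real \<Rightarrow> real \<Rightarrow> real) \<Rightarrow> bool" where
  "nondecr2 f \<longleftrightarrow> (\<forall>a b a' b'. 0 < a \<and> a \<le> a' \<and> a' \<le> 1 \<and> 0 < b \<and> b \<le> b' \<and> b' \<le> 1
      \<longrightarrow> f a b \<le> f a' b') \<and>
     (\<forall>a b. 0 < a \<and> a \<le> 1 \<and> 0 < b \<and> b \<le> 1 \<longrightarrow> 0 < f a b \<and> f a b \<le> 1)"

end

theory Submission
  imports Defs
begin

lemma lin_append:
  assumes lin: "linear_order_on S R" and sub: "R \<subseteq> S \<times> S" and e: "e \<notin> S"
  shows "linear_order_on (insert e S) (R \<union> (insert e S) \<times> {e})"
proof -
  from lin have refl: "\<forall>x\<in>S. (x,x)\<in>R" and tr: "trans R" and an: "antisym R" and tot: "total_on S R"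
    unfolding linear_order_on_def partial_order_on_def preorder_on_def refl_on_def by auto
  show ?thesis
    unfolding linear_order_on_def partial_order_on_def preorder_on_def refl_on_def
  proof (intro conjI)
    show "R \<union> insert e S \<times> {e} \<subseteq> insert e S \<times> insert e S" using sub by auto
    show "\<forall>x\<in>insert e S. (x, x) \<in> R \<union> insert e S \<times> {e}" using refl by auto
    show "trans (R \<union> insert e S \<times> {e})"
      unfolding trans_def using tr sub e by (auto dest: transD)
    show "antisym (R \<union> insert e S \<times> {e})"
      unfolding antisym_def using an sub e by (auto dest: antisymD)
    show "total_on (insert e S) (R \<union> insert e S \<times> {e})"
      using tot unfolding total_on_def by auto
  qed
qed

lemma sorted_order:
  fixes sz :: "'e \<Rightarrow> nat"
  assumes "finite S"
  shows "\<exists>R. R \<subseteq> S \<times> S \<and> linear_order_on S R \<and> (\<forall>(f,e)\<in>R. sz e \<le> sz f)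
           \<and> (S \<noteq> {} \<longrightarrow> (\<exists>m\<in>S. \<forall>x\<in>S. (x,m)\<in>R))"
  using assms
proof (induction S rule: finite_psubset_induct)
  case (psubset S)
  show ?case
  proof (cases "S = {}")
    case True
    then show ?thesis by (intro exI[of _ "{}"]) auto
  next
    case False
    obtain e where e: "e \<in> S" "sz e = Min (sz ` S)"
      using False psubset.hyps by (metis (mono_tags, opaque_lifting) Min_in empty_is_image finite_imageI imageE)
    have emin: "\<forall>x\<in>S. sz e \<le> sz x" using e psubset.hyps by auto
    obtain R where R: "R \<subseteq> (S-{e}) \<times> (S-{e})" "linear_order_on (S-{e}) R" "\<forall>(f,g)\<in>R. sz g \<le> sz f"
      using psubset.IH[of "S - {e}"] e by blast
    have ins: "insert e (S-{e}) = S" using e by auto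
    have "e \<notin> S - {e}" by simp
    note lin = lin_append[OF R(2) R(1) this, unfolded ins]
    show ?thesis
      by (intro exI[of _ "R \<union> S \<times> {e}"]) (use R emin lin e in auto)
  qed
qed

lemma core_order:
  fixes B :: real and EH :: "'e set" and Ve :: "'e \<Rightarrow> 'v set"
  assumes "finite S"
  shows "\<exists>R C. R \<subseteq> S \<times> S \<and> linear_order_on S R \<and> C \<subseteq> S \<and>
     (\<forall>x\<in>C. \<forall>y\<in>S-C. (x,y)\<in>R) \<and>
     (\<forall>y\<in>S-C. real (card {f\<in>nbhd EH Ve y. (f,y)\<in>R}) \<le> B) \<and>
     (\<forall>c\<in>C. B < real (card (nbhd EH Ve c \<inter> C))) \<and>
     (\<forall>(f,e)\<in>R. e\<in>C \<longrightarrow> f\<in>C \<longrightarrow> card (Ve e) \<le> card (Ve f)) \<and>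
     (C \<noteq> {} \<longrightarrow> (\<exists>m\<in>C. \<forall>x\<in>C. (x,m)\<in>R))"
  using assms
proof (induction S rule: finite_psubset_induct)
  case (psubset S)
  show ?case
  proof (cases "\<exists>e\<in>S. real (card (nbhd EH Ve e \<inter> S)) \<le> B")
    case False
    obtain R where R: "R \<subseteq> S \<times> S" "linear_order_on S R" "\<forall>(f,e)\<in>R. card (Ve e) \<le> card (Ve f)"
      "S \<noteq> {} \<longrightarrow> (\<exists>m\<in>S. \<forall>x\<in>S. (x,m)\<in>R)"
      using sorted_order[OF psubset.hyps, of "\<lambda>e. card (Ve e)"] by blast
    show ?thesis
      by (rule exI[of _ R], rule exI[of _ S]) (use R False in \<open>auto simp: not_le\<close>)
  next
    case True
    then obtain e where e: "e \<in> S" "real (card (nbhd EH Ve e \<inter> S)) \<le> B" by blast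
    have sub: "S - {e} \<subset> S" using e by blast
    from psubset.IH[OF sub] obtain R C where RC0: "(R \<subseteq> (S-{e}) \<times> (S-{e})) \<and>
       (linear_order_on (S-{e}) R) \<and>
       (C \<subseteq> S-{e}) \<and>
       (\<forall>x\<in>C. \<forall>y\<in>(S-{e})-C. (x,y)\<in>R) \<and>
       (\<forall>y\<in>(S-{e})-C. real (card {f\<in>nbhd EH Ve y. (f,y)\<in>R}) \<le> B) \<and>
       (\<forall>c\<in>C. B < real (card (nbhd EH Ve c \<inter> C))) \<and>
       (\<forall>(f,g)\<in>R. g\<in>C \<longrightarrow> f\<in>C \<longrightarrow> card (Ve g) \<le> card (Ve f)) \<and>
       (C \<noteq> {} \<longrightarrow> (\<exists>m\<in>C. \<forall>x\<in>C. (x,m)\<in>R))" by (elim exE) (erule that)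
    have RC: "R \<subseteq> (S-{e}) \<times> (S-{e})"
      "linear_order_on (S-{e}) R"
      "C \<subseteq> S-{e}"
      "\<forall>x\<in>C. \<forall>y\<in>(S-{e})-C. (x,y)\<in>R"
      "\<forall>y\<in>(S-{e})-C. real (card {f\<in>nbhd EH Ve y. (f,y)\<in>R}) \<le> B"
      "\<forall>c\<in>C. B < real (card (nbhd EH Ve c \<inter> C))"
      "\<forall>(f,g)\<in>R. g\<in>C \<longrightarrow> f\<in>C \<longrightarrow> card (Ve g) \<le> card (Ve f)"
      "C \<noteq> {} \<longrightarrow> (\<exists>m\<in>C. \<forall>x\<in>C. (x,m)\<in>R)" using RC0 by simp_all
    have ins: "insert e (S-{e}) = S" using e by auto
    have "e \<notin> S - {e}" by simp
    note lin = lin_append[OF RC(2) RC(1) this, unfolded ins]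
    let ?R = "R \<union> S \<times> {e}"
    have bd: "real (card {f\<in>nbhd EH Ve y. (f,y)\<in>?R}) \<le> B" if y: "y \<in> S - C" for y
    proof (cases "y = e")
      case True
      have "{f\<in>nbhd EH Ve y. (f,y)\<in>?R} = nbhd EH Ve e \<inter> S" using True RC(1) by auto
      then show ?thesis using e by simp
    next
      case False
      have "{f\<in>nbhd EH Ve y. (f,y)\<in>?R} = {f\<in>nbhd EH Ve y. (f,y)\<in>R}" using False by auto
      then show ?thesis using RC(5) y False by auto
    qed
    show ?thesis
    proof (rule exI[of _ ?R], rule exI[of _ C], intro conjI)
      show "?R \<subseteq> S \<times> S" using RC(1) e by auto
      show "linear_order_on S ?R" by (rule lin)
      show "C \<subseteq> S" using RC(3) by auto
      show "\<forall>x\<in>C. \<forall>y\<in>S-C. (x,y)\<in>?R"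
      proof (intro ballI)
        fix x y assume "x \<in> C" "y \<in> S - C"
        then show "(x,y)\<in>?R" using RC(3,4) by (cases "y = e") auto
      qed
      show "\<forall>y\<in>S-C. real (card {f\<in>nbhd EH Ve y. (f,y)\<in>?R}) \<le> B" using bd by blast
      show "\<forall>c\<in>C. B < real (card (nbhd EH Ve c \<inter> C))" using RC(6) by blast
      show "\<forall>(f,g)\<in>?R. g\<in>C \<longrightarrow> f\<in>C \<longrightarrow> card (Ve g) \<le> card (Ve f)" using RC(7,3) by blast
      show "C \<noteq> {} \<longrightarrow> (\<exists>m\<in>C. \<forall>x\<in>C. (x,m)\<in>?R)" using RC(8) by blast
    qed
  qed
qed

definition Lw :: "'e set \<Rightarrow> ('e \<Rightarrow> 'v set) \<Rightarrow> real \<Rightarrow> 'v \<Rightarrow> real" where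
  "Lw C Ve lam v = (\<Sum>g\<in>{g\<in>C. v \<in> Ve g \<and> real (card (Ve g)) \<le> lam}. real (card (Ve g)) - 1)"

lemma load_le:
  assumes hg: "hypergraph VH EH Ve" and cd: "codegree_le VH EH Ve t"
    and D: "D \<subseteq> EH" and v: "v \<in> VH"
  shows "(\<Sum>g\<in>{g\<in>D. v \<in> Ve g}. real (card (Ve g)) - 1) \<le> real t * (real (card VH) - 1)"
proof -
  have finV: "finite VH" and finE: "finite EH" and sub: "\<forall>e\<in>EH. Ve e \<subseteq> VH"
    and ne: "\<forall>e\<in>EH. Ve e \<noteq> {}"
    using hg unfolding hypergraph_def by blast+
  let ?G = "{g\<in>D. v \<in> Ve g}"
  have finG: "finite ?G" by (rule finite_subset[OF _ finE]) (use D in auto)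
  have eq1: "real (card (Ve g)) - 1 = real (card {u\<in>VH-{v}. u \<in> Ve g})" if g: "g \<in> ?G" for g
  proof -
    have "Ve g \<subseteq> VH" using g D sub by auto
    then have "{u\<in>VH-{v}. u \<in> Ve g} = Ve g - {v}" by auto
    moreover have "finite (Ve g)" using \<open>Ve g \<subseteq> VH\<close> finV finite_subset by blast
    moreover have "Ve g \<noteq> {}" using g D ne by auto
    ultimately have "1 \<le> card (Ve g)" by (simp add: Suc_le_eq card_gt_0_iff)
    then show ?thesis using g \<open>{u\<in>VH-{v}. u \<in> Ve g} = Ve g - {v}\<close> \<open>finite (Ve g)\<close>
      by (simp add: card_Diff_singleton of_nat_diff)
  qed
  have "(\<Sum>g\<in>?G. real (card (Ve g)) - 1) = (\<Sum>g\<in>?G. real (card {u\<in>VH-{v}. u \<in> Ve g}))"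
    using eq1 by (rule sum.cong[OF refl])
  also have "\<dots> = real (\<Sum>g\<in>?G. card {u\<in>VH-{v}. u \<in> Ve g})" by simp
  also have "(\<Sum>g\<in>?G. card {u\<in>VH-{v}. u \<in> Ve g}) = (\<Sum>u\<in>VH-{v}. card {g\<in>?G. u \<in> Ve g})"
    by (rule sum_multicount_gen) (use finG finV in auto)
  also have "\<dots> \<le> (\<Sum>u\<in>VH-{v}. t)"
  proof (rule sum_mono)
    fix u assume u: "u \<in> VH - {v}"
    have "{g\<in>?G. u \<in> Ve g} \<subseteq> {e\<in>EH. u \<in> Ve e \<and> v \<in> Ve e}" using D by auto
    then have "card {g\<in>?G. u \<in> Ve g} \<le> card {e\<in>EH. u \<in> Ve e \<and> v \<in> Ve e}"
      by (rule card_mono[rotated]) (use finE in auto)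
    also have "\<dots> \<le> t" using cd u v unfolding codegree_le_def by auto
    finally show "card {g\<in>?G. u \<in> Ve g} \<le> t" .
  qed
  also have "(\<Sum>u\<in>VH-{v}. t) = t * (card VH - 1)" using v finV by simp
  finally have X: "(\<Sum>g\<in>?G. real (card (Ve g)) - 1) \<le> real (t * (card VH - 1))"
    by linarith
  have "1 \<le> card VH" using v finV by (simp add: Suc_le_eq card_gt_0_iff) blast
  then have "real (t * (card VH - 1)) = real t * (real (card VH) - 1)" by (simp add: of_nat_diff)
  then show ?thesis using X by linarith
qed

lemma vertex_cnt:
  assumes hg: "hypergraph VH EH Ve" and cd: "codegree_le VH EH Ve t"
    and C: "C \<subseteq> EH" and v: "v \<in> VH"
    and smin: "\<forall>g\<in>C. s \<le> card (Ve g)" and s2: "2 \<le> s" and lam: "real s < lam"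
  shows "real (card {g\<in>C. v \<in> Ve g}) \<le> (1/(real s - 1) - 1/(lam - 1)) * Lw C Ve lam v
            + real t * (real (card VH) - 1) / (lam - 1)"
proof -
  define M where "M = real t * (real (card VH) - 1)"
  have finE: "finite EH" using hg unfolding hypergraph_def by blast
  let ?A = "{g\<in>C. v \<in> Ve g \<and> real (card (Ve g)) \<le> lam}"
  let ?B = "{g\<in>C. v \<in> Ve g \<and> \<not> real (card (Ve g)) \<le> lam}"
  have finA: "finite ?A" by (rule finite_subset[OF _ finE]) (use C in auto)
  have finB: "finite ?B" by (rule finite_subset[OF _ finE]) (use C in auto)
  have un: "{g\<in>C. v \<in> Ve g} = ?A \<union> ?B" by auto
  have cardAB: "card {g\<in>C. v \<in> Ve g} = card ?A + card ?B"
    unfolding un by (rule card_Un_disjoint[OF finA finB]) auto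
  have tot: "(\<Sum>g\<in>{g\<in>C. v \<in> Ve g}. real (card (Ve g)) - 1) \<le> M"
    unfolding M_def by (rule load_le[OF hg cd C v])
  have splitsum: "(\<Sum>g\<in>{g\<in>C. v \<in> Ve g}. real (card (Ve g)) - 1)
      = Lw C Ve lam v + (\<Sum>g\<in>?B. real (card (Ve g)) - 1)"
    unfolding Lw_def un by (rule sum.union_disjoint[OF finA finB]) auto
  have s1: "real s - 1 > 0" using s2 by simp
  have l1: "lam - 1 > 0" using lam s2 by simp
  have "real (card ?A) * (real s - 1) = (\<Sum>g\<in>?A. real s - 1)" by simp
  also have "\<dots> \<le> Lw C Ve lam v" unfolding Lw_def
    by (rule sum_mono) (use smin in auto)
  finally have a: "real (card ?A) \<le> Lw C Ve lam v / (real s - 1)"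
    using s1 by (simp add: pos_le_divide_eq)
  have "real (card ?B) * (lam - 1) = (\<Sum>g\<in>?B. lam - 1)" by simp
  also have "\<dots> \<le> (\<Sum>g\<in>?B. real (card (Ve g)) - 1)"
    by (rule sum_mono) auto
  finally have b: "real (card ?B) \<le> (M - Lw C Ve lam v) / (lam - 1)"
    using l1 tot splitsum by (simp add: pos_le_divide_eq)
  have "real (card {g\<in>C. v \<in> Ve g}) \<le> Lw C Ve lam v / (real s - 1) + (M - Lw C Ve lam v) / (lam - 1)"
    using a b cardAB by simp
  also have "\<dots> = (1/(real s - 1) - 1/(lam - 1)) * Lw C Ve lam v + M / (lam - 1)"
    by (simp add: diff_divide_distrib algebra_simps)
  finally show ?thesis unfolding M_def .
qed

lemma nbhd_bound:
  assumes hg: "hypergraph VH EH Ve" and cd: "codegree_le VH EH Ve t"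
    and C: "C \<subseteq> EH" and f: "f \<in> C"
    and smin: "\<forall>g\<in>C. s \<le> card (Ve g)" and s2: "2 \<le> s" and lam: "real s < lam"
  shows "real (card (nbhd EH Ve f \<inter> C)) \<le> (1/(real s - 1) - 1/(lam - 1)) * (\<Sum>v\<in>Ve f. Lw C Ve lam v)
            + real (card (Ve f)) * (real t * (real (card VH) - 1) / (lam - 1))"
proof -
  have finE: "finite EH" and finV: "finite VH" and subV: "Ve f \<subseteq> VH"
    using hg f C unfolding hypergraph_def by auto
  have finf: "finite (Ve f)" using subV finV finite_subset by blast
  have "nbhd EH Ve f \<inter> C \<subseteq> (\<Union>v\<in>Ve f. {g\<in>C. v \<in> Ve g})"
    unfolding nbhd_def by blast
  then have "card (nbhd EH Ve f \<inter> C) \<le> card (\<Union>v\<in>Ve f. {g\<in>C. v \<in> Ve g})"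
    by (rule card_mono[rotated]) (use finf finE C in \<open>auto intro: finite_subset\<close>)
  also have "\<dots> \<le> (\<Sum>v\<in>Ve f. card {g\<in>C. v \<in> Ve g})"
    by (rule card_UN_le[OF finf])
  finally have cnat: "card (nbhd EH Ve f \<inter> C) \<le> (\<Sum>v\<in>Ve f. card {g\<in>C. v \<in> Ve g})" .
  have "real (card (nbhd EH Ve f \<inter> C)) \<le> real (\<Sum>v\<in>Ve f. card {g\<in>C. v \<in> Ve g})"
    using cnat by (rule of_nat_mono)
  also have "\<dots> = (\<Sum>v\<in>Ve f. real (card {g\<in>C. v \<in> Ve g}))" by (rule of_nat_sum)
  also have "\<dots> \<le> (\<Sum>v\<in>Ve f. (1/(real s - 1) - 1/(lam - 1)) * Lw C Ve lam v
            + real t * (real (card VH) - 1) / (lam - 1))"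
    by (rule sum_mono, rule vertex_cnt[OF hg cd C _ smin s2 lam]) (use subV in auto)
  also have "\<dots> = (1/(real s - 1) - 1/(lam - 1)) * (\<Sum>v\<in>Ve f. Lw C Ve lam v)
            + real (card (Ve f)) * (real t * (real (card VH) - 1) / (lam - 1))"
    by (simp add: sum.distrib sum_distrib_left)
  finally show ?thesis .
qed

lemma real_choose2: "real (m choose 2) = real m * (real m - 1) / 2"
proof -
  have "even (m * (m - 1))" by auto
  then have "real (m * (m - 1) div 2) = real (m * (m - 1)) / 2"
    by (simp add: real_of_nat_div)
  then show ?thesis by (cases m) (simp_all add: choose_two algebra_simps)
qed

lemma sum_Lw:
  assumes hg: "hypergraph VH EH Ve" and C: "C \<subseteq> EH"
  shows "(\<Sum>u\<in>VH. Lw C Ve lam u) =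
     (\<Sum>g\<in>{g\<in>C. real (card (Ve g)) \<le> lam}. real (card (Ve g)) * (real (card (Ve g)) - 1))"
proof -
  let ?W = "{g\<in>C. real (card (Ve g)) \<le> lam}"
  have finE: "finite EH" and finV: "finite VH" and subV: "\<forall>e\<in>EH. Ve e \<subseteq> VH"
    using hg unfolding hypergraph_def by auto
  have finW: "finite ?W" by (rule finite_subset[OF _ finE]) (use C in auto)
  have "(\<Sum>u\<in>VH. Lw C Ve lam u) = (\<Sum>u\<in>VH. \<Sum>g\<in>{g\<in>?W. u \<in> Ve g}. real (card (Ve g)) - 1)"
    unfolding Lw_def by (rule sum.cong[OF refl], rule sum.cong) auto
  also have "\<dots> = (\<Sum>g\<in>?W. \<Sum>u\<in>{u\<in>VH. u \<in> Ve g}. real (card (Ve g)) - 1)"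
    by (rule sum.swap_restrict[OF finV finW])
  also have "\<dots> = (\<Sum>g\<in>?W. real (card (Ve g)) * (real (card (Ve g)) - 1))"
  proof (rule sum.cong[OF refl])
    fix g assume g: "g \<in> ?W"
    then have "{u\<in>VH. u \<in> Ve g} = Ve g" using subV C by auto
    then show "(\<Sum>u\<in>{u\<in>VH. u \<in> Ve g}. real (card (Ve g)) - 1) = real (card (Ve g)) * (real (card (Ve g)) - 1)"
      by simp
  qed
  finally show ?thesis .
qed

lemma sum_swap_bound:
  assumes hg: "hypergraph VH EH Ve" and cd: "codegree_le VH EH Ve t"
    and G: "G \<subseteq> EH" and v0: "v0 \<in> VH" and Gv: "\<forall>g\<in>G. v0 \<in> Ve g"
    and F: "\<forall>u\<in>VH. 0 \<le> F u"
  shows "(\<Sum>g\<in>G. \<Sum>u\<in>Ve g - {v0}. F u) \<le> real t * (\<Sum>u\<in>VH. F u)"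
proof -
  have finE: "finite EH" and finV: "finite VH" and subV: "\<forall>e\<in>EH. Ve e \<subseteq> VH"
    using hg unfolding hypergraph_def by auto
  have finG: "finite G" using G finE finite_subset by blast
  have finV': "finite (VH - {v0})" using finV by simp
  have "(\<Sum>g\<in>G. \<Sum>u\<in>Ve g - {v0}. F u) = (\<Sum>g\<in>G. \<Sum>u\<in>{u\<in>VH-{v0}. u \<in> Ve g}. F u)"
  proof (rule sum.cong[OF refl])
    fix g assume "g \<in> G"
    then have "Ve g - {v0} = {u\<in>VH-{v0}. u \<in> Ve g}" using subV G by auto
    then show "(\<Sum>u\<in>Ve g - {v0}. F u) = (\<Sum>u\<in>{u\<in>VH-{v0}. u \<in> Ve g}. F u)" by simp
  qed
  also have "\<dots> = (\<Sum>u\<in>VH-{v0}. \<Sum>g\<in>{g\<in>G. u \<in> Ve g}. F u)"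
    by (rule sum.swap_restrict[OF finG finV'])
  also have "\<dots> \<le> (\<Sum>u\<in>VH-{v0}. real t * F u)"
  proof (rule sum_mono)
    fix u assume u: "u \<in> VH - {v0}"
    have "{g\<in>G. u \<in> Ve g} \<subseteq> {e\<in>EH. u \<in> Ve e \<and> v0 \<in> Ve e}" using G Gv by auto
    then have "card {g\<in>G. u \<in> Ve g} \<le> card {e\<in>EH. u \<in> Ve e \<and> v0 \<in> Ve e}"
      by (rule card_mono[rotated]) (use finE in auto)
    also have "\<dots> \<le> t" using cd u v0 unfolding codegree_le_def by auto
    finally have ct: "real (card {g\<in>G. u \<in> Ve g}) \<le> real t" by simp
    have "(\<Sum>g\<in>{g\<in>G. u \<in> Ve g}. F u) = real (card {g\<in>G. u \<in> Ve g}) * F u" by simp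
    also have "\<dots> \<le> real t * F u" using ct F u by (simp add: mult_right_mono)
    finally show "(\<Sum>g\<in>{g\<in>G. u \<in> Ve g}. F u) \<le> real t * F u" .
  qed
  also have "\<dots> = real t * (\<Sum>u\<in>VH-{v0}. F u)" by (simp add: sum_distrib_left)
  also have "\<dots> \<le> real t * (\<Sum>u\<in>VH. F u)"
    by (rule mult_left_mono, rule sum_mono2) (use finV F in auto)
  finally show ?thesis .
qed

lemma vol_eq:
  "vol VH Ve W = (\<Sum>g\<in>W. real (card (Ve g)) * (real (card (Ve g)) - 1)) /
      (real (card VH) * (real (card VH) - 1))"
  unfolding vol_def real_choose2
  by (simp add: sum_divide_distrib[symmetric])

lemma Lw_nonneg:
  assumes hg: "hypergraph VH EH Ve" and C: "C \<subseteq> EH"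
  shows "0 \<le> Lw C Ve lam v"
proof -
  have "\<forall>e\<in>EH. Ve e \<noteq> {} \<and> finite (Ve e)"
    using hg unfolding hypergraph_def by (meson finite_subset)
  then have "\<forall>g\<in>C. 1 \<le> card (Ve g)" using C by (auto simp: Suc_le_eq card_gt_0_iff)
  then show ?thesis unfolding Lw_def by (intro sum_nonneg) auto
qed

lemma Lw_le:
  assumes hg: "hypergraph VH EH Ve" and cd: "codegree_le VH EH Ve t" and C: "C \<subseteq> EH" and v: "v \<in> VH"
  shows "Lw C Ve lam v \<le> real t * (real (card VH) - 1)"
proof -
  have "\<forall>e\<in>EH. Ve e \<noteq> {} \<and> finite (Ve e)" and finE: "finite EH"
    using hg unfolding hypergraph_def by (meson finite_subset)+
  then have one: "\<forall>g\<in>C. 1 \<le> card (Ve g)" using C by (auto simp: Suc_le_eq card_gt_0_iff)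
  have fin: "finite {g\<in>C. v \<in> Ve g}" by (rule finite_subset[OF _ finE]) (use C in auto)
  have "Lw C Ve lam v \<le> (\<Sum>g\<in>{g\<in>C. v \<in> Ve g}. real (card (Ve g)) - 1)"
    unfolding Lw_def by (rule sum_mono2[OF fin]) (use one in auto)
  also have "\<dots> \<le> real t * (real (card VH) - 1)" by (rule load_le[OF hg cd C v])
  finally show ?thesis .
qed

lemma core_vol:
  fixes tau lam0 lam1 :: real
  assumes hg: "hypergraph VH EH Ve" and cd: "codegree_le VH EH Ve t"
    and C: "C \<subseteq> EH" and e: "e \<in> C" and smin: "\<forall>g\<in>C. s \<le> card (Ve g)"
    and se: "s = card (Ve e)" and s2: "2 \<le> s"
    and core: "\<forall>c\<in>C. real t * (1 - tau) * real (card VH) < real (card (nbhd EH Ve c \<inter> C))"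
    and tau: "tau \<le> 1" and l0: "real s < lam0" and l1: "real s < lam1"
    and ypos: "0 \<le> (1 - tau) - real s / (lam0 - 1)"
    and zpos: "0 \<le> ((1 - tau) - lam0 / (lam1 - 1)) / (1/(real s - 1) - 1/(lam1 - 1)) - 1"
    and tpos: "0 < t"
  shows "vol VH Ve {g\<in>C. real (card (Ve g)) \<le> lam1} \<ge>
     real t * (real (card VH) - 1) / real (card VH) *
     (((1 - tau) - real s / (lam0 - 1)) / ((1/(real s - 1) - 1/(lam0 - 1)) * real s * (lam0 - 1))) *
     (((1 - tau) - lam0 / (lam1 - 1)) / (1/(real s - 1) - 1/(lam1 - 1)) - 1)"
proof -
  define n where "n = real (card VH)"
  define M where "M = real t * (n - 1)"
  define p where "p = 1 - tau"
  define k0 where "k0 = 1/(real s - 1) - 1/(lam0 - 1)"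
  define k1 where "k1 = 1/(real s - 1) - 1/(lam1 - 1)"
  define yv where "yv = (p - real s / (lam0 - 1)) / (k0 * real s * (lam0 - 1))"
  define zv where "zv = (p - lam0 / (lam1 - 1)) / k1 - 1"
  have finE: "finite EH" and finV: "finite VH" and subV: "\<forall>e\<in>EH. Ve e \<subseteq> VH"
    using hg unfolding hypergraph_def by auto
  have eV: "Ve e \<subseteq> VH" using e C subV by auto
  have fine: "finite (Ve e)" using eV finV finite_subset by blast
  have "s \<le> card VH" using se eV finV card_mono by blast
  then have n2: "2 \<le> n" unfolding n_def using s2 by simp
  have p0: "0 \<le> p" unfolding p_def using tau by simp
  have M0: "0 \<le> M" unfolding M_def using n2 by simp
  have k0pos: "0 < k0" unfolding k0_def using l0 s2 by (simp add: frac_less2)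
  have k1pos: "0 < k1" unfolding k1_def using l1 s2 by (simp add: frac_less2)
  have s1: "0 < real s - 1" using s2 by simp
  have lam0pos: "0 < lam0 - 1" using l0 s2 by simp
  have lam1pos: "0 < lam1 - 1" using l1 s2 by simp
  have tp: "0 \<le> real t * (1 - tau)" using tau by simp
  have pM: "p * M \<le> real t * (1 - tau) * n"
    unfolding M_def p_def using mult_left_mono[OF _ tp, of "n-1" n] by (simp add: algebra_simps)
  have ene: "Ve e \<noteq> {}" using s2 se by auto
  define P0 where "P0 = Max (Lw C Ve lam0 ` Ve e)"
  have "P0 \<in> Lw C Ve lam0 ` Ve e" unfolding P0_def using fine ene by (intro Max_in) auto
  then obtain v0 where v0: "v0 \<in> Ve e" "Lw C Ve lam0 v0 = P0" by auto
  have v0V: "v0 \<in> VH" using v0 eV by auto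
  have sumA: "(\<Sum>v\<in>Ve e. Lw C Ve lam0 v) \<le> real s * P0"
  proof -
    have "(\<Sum>v\<in>Ve e. Lw C Ve lam0 v) \<le> of_nat (card (Ve e)) * P0"
      by (rule sum_bounded_above) (use fine P0_def in auto)
    then show ?thesis using se by simp
  qed
  have "real t * (1 - tau) * n < real (card (nbhd EH Ve e \<inter> C))" using core e n_def by auto
  also have "\<dots> \<le> k0 * (\<Sum>v\<in>Ve e. Lw C Ve lam0 v) + real (card (Ve e)) * (M / (lam0 - 1))"
    unfolding k0_def M_def n_def by (rule nbhd_bound[OF hg cd C e smin s2 l0])
  also have "\<dots> \<le> k0 * (real s * P0) + real s * (M / (lam0 - 1))"
    using sumA k0pos se by (simp add: mult_left_mono)
  finally have A: "p * M < k0 * (real s * P0) + real s * (M / (lam0 - 1))" using pM by linarith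
  have A2: "M * (p - real s / (lam0 - 1)) \<le> k0 * real s * P0"
    using A by (simp add: algebra_simps)
  have P0y: "M * yv \<le> P0 / (lam0 - 1)"
  proof -
    have den: "0 < k0 * real s * (lam0 - 1)" using k0pos s2 lam0pos by (intro mult_pos_pos) auto
    have "M * yv = (M * (p - real s / (lam0 - 1))) / (k0 * real s * (lam0 - 1))"
      unfolding yv_def by simp
    also have "\<dots> \<le> (k0 * real s * P0) / (k0 * real s * (lam0 - 1))"
      using A2 den by (intro divide_right_mono) auto
    also have "\<dots> = P0 / (lam0 - 1)" using k0pos s2 by simp
    finally show ?thesis .
  qed
  define G where "G = {g\<in>C. v0 \<in> Ve g \<and> real (card (Ve g)) \<le> lam0}"
  have finG: "finite G" unfolding G_def by (rule finite_subset[OF _ finE]) (use C in auto)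
  have GC: "G \<subseteq> C" unfolding G_def by auto
  have "P0 = (\<Sum>g\<in>G. real (card (Ve g)) - 1)" using v0(2) unfolding Lw_def G_def by simp
  also have "\<dots> \<le> of_nat (card G) * (lam0 - 1)"
    by (rule sum_bounded_above) (auto simp: G_def)
  finally have cG: "P0 / (lam0 - 1) \<le> real (card G)" using lam0pos by (simp add: pos_divide_le_eq)
  define Z where "Z g = (\<Sum>u\<in>Ve g - {v0}. Lw C Ve lam1 u)" for g
  have Zg: "M * zv \<le> Z g" if g: "g \<in> G" for g
  proof -
    have gC: "g \<in> C" using g GC by auto
    have gV: "Ve g \<subseteq> VH" using gC C subV by auto
    have fing: "finite (Ve g)" using gV finV finite_subset by blast
    have v0g: "v0 \<in> Ve g" using g G_def by auto
    have cg: "real (card (Ve g)) \<le> lam0" using g G_def by auto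
    have split: "(\<Sum>u\<in>Ve g. Lw C Ve lam1 u) = Lw C Ve lam1 v0 + Z g"
      unfolding Z_def using fing v0g by (simp add: sum.remove)
    have Lv0: "Lw C Ve lam1 v0 \<le> M" unfolding M_def n_def by (rule Lw_le[OF hg cd C v0V])
    have "real t * (1 - tau) * n < real (card (nbhd EH Ve g \<inter> C))" using core gC n_def by auto
    also have "\<dots> \<le> k1 * (\<Sum>u\<in>Ve g. Lw C Ve lam1 u) + real (card (Ve g)) * (M / (lam1 - 1))"
      unfolding k1_def M_def n_def by (rule nbhd_bound[OF hg cd C gC smin s2 l1])
    also have "\<dots> \<le> k1 * (M + Z g) + lam0 * (M / (lam1 - 1))"
    proof -
      have "k1 * (\<Sum>u\<in>Ve g. Lw C Ve lam1 u) \<le> k1 * (M + Z g)"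
        using split Lv0 k1pos by (simp add: mult_left_mono)
      moreover have "real (card (Ve g)) * (M / (lam1 - 1)) \<le> lam0 * (M / (lam1 - 1))"
        using cg M0 lam1pos by (intro mult_right_mono) auto
      ultimately show ?thesis by linarith
    qed
    finally have "p * M < k1 * (M + Z g) + lam0 * (M / (lam1 - 1))" using pM by linarith
    then have "M * (p - lam0 / (lam1 - 1)) - k1 * M < k1 * Z g" by (simp add: algebra_simps)
    then have "(M * (p - lam0 / (lam1 - 1)) - k1 * M) / k1 < Z g"
      using k1pos by (simp add: pos_divide_less_eq mult.commute)
    moreover have "(M * (p - lam0 / (lam1 - 1)) - k1 * M) / k1 = M * zv"
      unfolding zv_def using k1pos by (simp add: field_simps)
    ultimately show ?thesis by simp
  qed
  have zv0: "0 \<le> zv" using zpos unfolding zv_def k1_def p_def .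
  have yv0: "0 \<le> yv" unfolding yv_def p_def using ypos k0pos s2 lam0pos by simp
  have "(M * yv) * (M * zv) \<le> real (card G) * (M * zv)"
    using P0y cG M0 zv0 by (intro mult_right_mono) auto
  also have "\<dots> \<le> (\<Sum>g\<in>G. Z g)"
    using sum_bounded_below[of G "M * zv" Z] Zg by simp
  also have "\<dots> \<le> real t * (\<Sum>u\<in>VH. Lw C Ve lam1 u)"
    unfolding Z_def
    by (rule sum_swap_bound[OF hg cd _ v0V]) (use GC C G_def Lw_nonneg[OF hg C] in auto)
  also have "(\<Sum>u\<in>VH. Lw C Ve lam1 u) =
     (\<Sum>g\<in>{g\<in>C. real (card (Ve g)) \<le> lam1}. real (card (Ve g)) * (real (card (Ve g)) - 1))"
    by (rule sum_Lw[OF hg C])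
  finally have Y: "(M * yv) * (M * zv) \<le> real t * (\<Sum>g\<in>{g\<in>C. real (card (Ve g)) \<le> lam1}. real (card (Ve g)) * (real (card (Ve g)) - 1))" .
  have "real t * (n - 1) / n * yv * zv = (M * yv) * (M * zv) / (real t * (n * (n - 1)))"
    unfolding M_def using tpos n2 by (simp add: field_simps power2_eq_square)
  also have "\<dots> \<le> real t * (\<Sum>g\<in>{g\<in>C. real (card (Ve g)) \<le> lam1}. real (card (Ve g)) * (real (card (Ve g)) - 1)) / (real t * (n * (n - 1)))"
    using Y tpos n2 by (intro divide_right_mono) auto
  also have "\<dots> = vol VH Ve {g\<in>C. real (card (Ve g)) \<le> lam1}"
    unfolding vol_eq n_def using tpos by simp
  finally show ?thesis unfolding n_def yv_def zv_def k0_def k1_def p_def .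
qed

lemma cancel_aux: "(x::real) \<noteq> 0 \<Longrightarrow> (A / (B * x)) * C * x = A * C / B"
  by (cases "B = 0") (simp_all add: field_simps)

lemma numeric:
  fixes a K S n :: real
  assumes a0: "0 < a" and a1: "a < 1" and K1: "1 \<le> K"
    and pz: "0 < 1 - a^4 - 7 * a / K"
    and hS: "100 * K^2 / a^4 \<le> S" and nS: "S \<le> n"
  defines "tau \<equiv> a^4" and "d0 \<equiv> a^3 * K" and "d1 \<equiv> 3 * a * K^3"
  defines "l0 \<equiv> (1 + d0) * S" and "l1 \<equiv> (1 + d1) * S"
  shows "0 \<le> (1 - tau) - S / (l0 - 1)"
    and "0 \<le> ((1 - tau) - l0 / (l1 - 1)) / (1/(S - 1) - 1/(l1 - 1)) - 1"
    and "(1 - tau - 7 * a / K)^2 / (1 + d1) \<le>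
      (n - 1) / n *
     (((1 - tau) - S / (l0 - 1)) / ((1/(S - 1) - 1/(l0 - 1)) * S * (l0 - 1))) *
     (((1 - tau) - l0 / (l1 - 1)) / (1/(S - 1) - 1/(l1 - 1)) - 1)"
proof -
  define p where "p = 1 - tau"
  define u where "u = a / K"
  define h where "h = 1 / S"
  have K0: "0 < K" using K1 by simp
  have a4: "0 < a^4" using a0 by simp
  have u0: "0 < u" unfolding u_def using a0 K0 by simp
  have d00: "0 < d0" unfolding d0_def using a0 K0 by simp
  have d10: "0 < d1" unfolding d1_def using a0 K0 by simp
  have pu: "7 * u < p" using pz unfolding p_def u_def tau_def by simp
  have p1: "p \<le> 1" unfolding p_def tau_def using a4 by simp
  have K2: "1 \<le> K^2" using K1 by (simp add: one_le_power)
  have "100 \<le> 100 * K^2 / a^4"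
  proof -
    have "a^4 \<le> 1" using a0 a1 by (simp add: power_le_one)
    then have "100 * 1 \<le> 100 * K^2 / a^4" using K2 a4
      by (simp add: le_divide_eq)
    then show ?thesis by simp
  qed
  then have S100: "100 \<le> S" using hS by simp
  have S0: "0 < S" using S100 by simp
  have hS1: "h * S = 1" unfolding h_def using S0 by simp
  have h0: "0 < h" unfolding h_def using S0 by simp
  have hle: "h \<le> a^4 / (100 * K^2)"
  proof -
    have "100 * K^2 / a^4 \<le> S" by (rule hS)
    then have "100 * K^2 \<le> S * a^4" using a4 by (simp add: divide_le_eq)
    then show ?thesis unfolding h_def using S0 K0 by (simp add: field_simps)
  qed
  have tau_ud0: "tau = u * d0" unfolding tau_def u_def d0_def using K0 by (simp add: field_simps power_numeral_reduce)
  have hd0: "h / d0 \<le> u / 100"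
  proof -
    have "h / d0 \<le> (a^4 / (100 * K^2)) / d0" by (rule divide_right_mono[OF hle]) (use d00 in simp)
    also have "\<dots> = a / (100 * K^3)" unfolding d0_def using a0 K0 by (simp add: field_simps power_numeral_reduce)
    also have "\<dots> \<le> a / (100 * K)"
    proof -
      have "K \<le> K^3" using power_increasing[of 1 3 K] K1 by simp
      then show ?thesis using a0 K0 by (simp add: frac_le)
    qed
    finally show ?thesis unfolding u_def by simp
  qed
  have hd1: "h / d1 \<le> u / 100"
  proof -
    have "h / d1 \<le> (a^4 / (100 * K^2)) / d1" by (rule divide_right_mono[OF hle]) (use d10 in simp)
    also have "\<dots> = a^3 / (300 * K^5)" unfolding d1_def using a0 K0 by (simp add: field_simps power_numeral_reduce)
    also have "\<dots> \<le> a / (100 * K)"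
    proof -
      have "a^3 \<le> a" using power_decreasing[of 1 3 a] a0 a1 by simp
      moreover have "K \<le> 3 * K^5" using power_increasing[of 1 5 K] K1 by simp
      ultimately show ?thesis using a0 K0 by (simp add: frac_le)
    qed
    finally show ?thesis unfolding u_def by simp
  qed
  have hu: "h \<le> u / 100"
  proof -
    have "h \<le> a^4 / (100 * K^2)" by (rule hle)
    also have "\<dots> \<le> a / (100 * K)"
    proof -
      have "a^4 \<le> a" using power_decreasing[of 1 4 a] a0 a1 by simp
      moreover have "K \<le> K^2" using K1 by (simp add: power2_eq_square)
      ultimately show ?thesis using a0 K0 by (simp add: frac_le)
    qed
    finally show ?thesis unfolding u_def by simp
  qed
  have hu2: "h \<le> u^2 / 100"
  proof -
    have "h \<le> a^4 / (100 * K^2)" by (rule hle)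
    also have "\<dots> \<le> a^2 / (100 * K^2)"
      using a0 a1 K0 by (intro divide_right_mono) (simp_all add: power_decreasing)
    finally show ?thesis unfolding u_def by (simp add: power_divide)
  qed
  have td1: "tau / d1 \<le> u / 3"
  proof -
    have "tau / d1 = a^3 / (3 * K^3)" unfolding tau_def d1_def using a0 K0 by (simp add: field_simps power_numeral_reduce)
    also have "\<dots> \<le> a / (3 * K)"
    proof -
      have "a^3 \<le> a" using power_decreasing[of 1 3 a] a0 a1 by simp
      moreover have "K \<le> K^3" using power_increasing[of 1 3 K] K1 by simp
      ultimately show ?thesis using a0 K0 by (simp add: frac_le)
    qed
    finally show ?thesis unfolding u_def by simp
  qed
  have d01: "d0 / d1 \<le> u / 3"
  proof -
    have "d0 / d1 = a^2 / (3 * K^2)" unfolding d0_def d1_def using a0 K0 by (simp add: field_simps power_numeral_reduce)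
    also have "\<dots> \<le> a / (3 * K)"
    proof -
      have "a^2 \<le> a" using a0 a1 by (simp add: power2_eq_square)
      moreover have "K \<le> K^2" using K1 by (simp add: power2_eq_square)
      ultimately have "a^2 * K \<le> a * K^2" using a0 K0 by (simp add: mult_mono)
      then show ?thesis using a0 K0 by (simp add: field_simps power2_eq_square)
    qed
    finally show ?thesis unfolding u_def by simp
  qed
  have d0d1: "d0 \<le> d1"
  proof -
    have "d0 / d1 \<le> 1" using d01 pu p1 by simp
    then show ?thesis using d10 by (simp add: divide_le_eq)
  qed
  define A0 where "A0 = p - u - p * h / d0"
  define A1 where "A1 = p - tau / d1 - d0 / d1 - p * h / d1"
  have p0: "0 \<le> p" using pu u0 by simp
  have phd0: "p * h / d0 \<le> u / 100"
  proof -
    have "p * h / d0 \<le> 1 * h / d0" using p1 h0 d00 by (intro divide_right_mono mult_right_mono) auto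
    then show ?thesis using hd0 by linarith
  qed
  have phd1: "p * h / d1 \<le> u / 100"
  proof -
    have "p * h / d1 \<le> 1 * h / d1" using p1 h0 d10 by (intro divide_right_mono mult_right_mono) auto
    then show ?thesis using hd1 by linarith
  qed
  have A0lb: "p - 101/100 * u \<le> A0" unfolding A0_def using phd0 by linarith
  have A1lb: "p - 68/100 * u \<le> A1" unfolding A1_def using phd1 td1 d01 u0 by linarith
  have A1ub: "A1 \<le> 1"
  proof -
    have "0 \<le> tau / d1" unfolding tau_def using d10 by simp
    moreover have "0 \<le> d0 / d1" using d00 d10 by simp
    moreover have "0 \<le> p * h / d1" using p0 h0 d10 by simp
    ultimately show ?thesis unfolding A1_def using p1 by simp
  qed
  have A0pos: "0 \<le> A0" using A0lb pu u0 by simp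
  have I1: "p * (l0 - 1) - S = S * d0 * A0"
  proof -
    have "S * d0 * A0 = S * d0 * p - S * (u * d0) - p * (h * S)"
      unfolding A0_def using d00 by (simp add: field_simps)
    also have "\<dots> = S * d0 * p - S * tau - p" using hS1 tau_ud0 by (simp add: mult.commute)
    also have "\<dots> = p * (l0 - 1) - S" unfolding l0_def p_def by (simp add: algebra_simps)
    finally show ?thesis by simp
  qed
  have I2: "p * (l1 - 1) - l0 = S * d1 * A1"
  proof -
    have "S * d1 * A1 = S * d1 * p - S * tau - S * d0 - p * (h * S)"
      unfolding A1_def using d10 by (simp add: field_simps)
    also have "\<dots> = S * d1 * p - S * tau - S * d0 - p" using hS1 by (simp add: mult.commute)
    also have "\<dots> = p * (l1 - 1) - l0" unfolding l0_def l1_def p_def by (simp add: algebra_simps)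
    finally show ?thesis by simp
  qed
  have l0S: "l0 - 1 \<le> (1 + d0) * S" unfolding l0_def by simp
  have l01: "0 < l0 - 1" unfolding l0_def using d00 S100
    by (smt (verit) mult_le_cancel_right1)
  have l11: "0 < l1 - 1" unfolding l1_def using d10 S100
    by (smt (verit) mult_le_cancel_right1)
  have S1: "0 < S - 1" using S100 by simp
  have yeq: "((1 - tau) - S / (l0 - 1)) / ((1/(S - 1) - 1/(l0 - 1)) * S * (l0 - 1))
     = A0 * (S - 1) / (S * (l0 - 1))"
  proof -
    have e1: "(1 - tau) - S / (l0 - 1) = S * d0 * A0 / (l0 - 1)"
      using I1 l01 unfolding p_def by (simp add: field_simps)
    have "1/(S - 1) - 1/(l0 - 1) = (l0 - 1 - (S - 1)) / ((S - 1) * (l0 - 1))"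
      using l01 S1 by (simp add: field_simps)
    also have "l0 - 1 - (S - 1) = S * d0" unfolding l0_def by (simp add: algebra_simps)
    finally have eq: "1/(S - 1) - 1/(l0 - 1) = S * d0 / ((S - 1) * (l0 - 1))" .
    have ne: "l0 - 1 \<noteq> 0" "S - 1 \<noteq> 0" using l01 S1 by auto
    have e2: "(1/(S - 1) - 1/(l0 - 1)) * S * (l0 - 1) = S * S * d0 / (S - 1)"
      unfolding eq cancel_aux[OF ne(1)] by (simp add: ac_simps)
    show ?thesis unfolding e1 e2 using l01 S1 S0 d00 by (simp add: field_simps)
  qed
  have zeq: "((1 - tau) - l0 / (l1 - 1)) / (1/(S - 1) - 1/(l1 - 1)) - 1 = A1 * (S - 1) - 1"
  proof -
    have e1: "(1 - tau) - l0 / (l1 - 1) = S * d1 * A1 / (l1 - 1)"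
      using I2 l11 unfolding p_def by (simp add: field_simps)
    have "1/(S - 1) - 1/(l1 - 1) = (l1 - 1 - (S - 1)) / ((S - 1) * (l1 - 1))"
      using l11 S1 by (simp add: field_simps)
    also have "l1 - 1 - (S - 1) = S * d1" unfolding l1_def by (simp add: algebra_simps)
    finally have e2: "1/(S - 1) - 1/(l1 - 1) = S * d1 / ((S - 1) * (l1 - 1))" .
    show ?thesis unfolding e1 e2 using l11 S1 S0 d10 by (simp add: field_simps)
  qed
  define B where "B = A1 * (1 - h) - h"
  have Blb: "p - 7/10 * u \<le> B"
  proof -
    have "A1 * h \<le> h" using A1ub h0 by (simp add: mult_left_le_one_le mult_le_cancel_right1)
    then have "A1 - 2 * h \<le> B" unfolding B_def by (simp add: algebra_simps)
    then show ?thesis using A1lb hu by simp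
  qed
  have B0: "0 \<le> B" using Blb pu u0 by simp
  have zB: "A1 * (S - 1) - 1 = S * B"
    unfolding B_def using hS1 by (simp add: algebra_simps)
  have zpos: "0 \<le> A1 * (S - 1) - 1" unfolding zB using S0 B0 by simp
  show "0 \<le> (1 - tau) - S / (l0 - 1)"
  proof -
    have "(1 - tau) - S / (l0 - 1) = S * d0 * A0 / (l0 - 1)"
      using I1 l01 unfolding p_def by (simp add: field_simps)
    then show ?thesis using S0 d00 A0pos l01 by simp
  qed
  show "0 \<le> ((1 - tau) - l0 / (l1 - 1)) / (1/(S - 1) - 1/(l1 - 1)) - 1"
    unfolding zeq by (rule zpos)
  have X: "(p - 7 * u)^2 + u^2 \<le> (p - 101/100 * u) * (p - 7/10 * u)"
  proof -
    have "0 \<le> u * (1229/100 * p - 49293/1000 * u)" using u0 pu by (intro mult_nonneg_nonneg) auto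
    moreover have "(p - 101/100 * u) * (p - 7/10 * u) - ((p - 7 * u)^2 + u^2) = u * (1229/100 * p - 49293/1000 * u)"
      by (simp add: field_simps power2_eq_square)
    ultimately show ?thesis by linarith
  qed
  have Xle1: "(p - 101/100 * u) * (p - 7/10 * u) \<le> 1"
  proof -
    have "(p - 101/100 * u) * (p - 7/10 * u) \<le> 1 * 1"
      using p1 u0 pu by (intro mult_mono) auto
    then show ?thesis by simp
  qed
  have X0: "0 \<le> (p - 101/100 * u) * (p - 7/10 * u)" using pu u0 by (intro mult_nonneg_nonneg) auto
  have h1: "0 \<le> 1 - h" using hu pu p1 u0 by simp
  have n0: "0 < n" using nS S0 by simp
  have nh: "1 - h \<le> (n - 1) / n"
  proof -
    have "1 / n \<le> h" unfolding h_def using nS S0 by (simp add: frac_le)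
    then show ?thesis using n0 by (simp add: diff_divide_distrib)
  qed
  have main: "(p - 7 * u)^2 \<le> (1 - h) * (1 - h) * A0 * B"
  proof -
    have "(1 - 2 * h) * ((p - 101/100 * u) * (p - 7/10 * u)) \<le> (1 - h) * (1 - h) * (A0 * B)"
    proof (rule mult_mono)
      show "1 - 2 * h \<le> (1 - h) * (1 - h)" by (simp add: algebra_simps)
      show "(p - 101/100 * u) * (p - 7/10 * u) \<le> A0 * B"
        using A0lb Blb pu u0 by (intro mult_mono) auto
      show "0 \<le> (1 - h) * (1 - h)" by simp
      show "0 \<le> (p - 101/100 * u) * (p - 7/10 * u)" by (rule X0)
    qed
    moreover have "(p - 7 * u)^2 \<le> (1 - 2 * h) * ((p - 101/100 * u) * (p - 7/10 * u))"
    proof -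
      define Xv where "Xv = (p - 101/100 * u) * (p - 7/10 * u)"
      have "2 * h * Xv \<le> 2 * h * 1"
        using Xle1 h0 unfolding Xv_def by (intro mult_left_mono) auto
      moreover have "2 * h \<le> u^2" using hu2 h0 by simp
      moreover have "(1 - 2 * h) * Xv = Xv - 2 * h * Xv" by (simp add: algebra_simps)
      moreover have "(p - 7 * u)^2 + u^2 \<le> Xv" using X unfolding Xv_def .
      ultimately show ?thesis unfolding Xv_def[symmetric] by linarith
    qed
    ultimately show ?thesis by (simp add: mult.assoc)
  qed
  have lhs: "(1 - tau - 7 * a / K)^2 / (1 + d1) \<le> (p - 7 * u)^2 / (1 + d0)"
  proof -
    have "(1 - tau - 7 * a / K) = p - 7 * u" unfolding p_def u_def by simp
    moreover have "(p - 7 * u)^2 / (1 + d1) \<le> (p - 7 * u)^2 / (1 + d0)"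
      using d0d1 d00 by (intro divide_left_mono) auto
    ultimately show ?thesis by simp
  qed
  have "(p - 7 * u)^2 / (1 + d0) \<le> (1 - h) * (1 - h) * A0 * B / (1 + d0)"
    using main d00 by (intro divide_right_mono) auto
  also have "\<dots> = (1 - h) * (A0 * (S - 1) / (S * ((1 + d0) * S))) * (A1 * (S - 1) - 1)"
  proof -
    have Sh: "S - 1 = S * (1 - h)" using hS1 by (simp add: algebra_simps)
    have ne: "S \<noteq> 0" "1 + d0 \<noteq> 0" using S0 d00 by auto
    show ?thesis unfolding zB unfolding Sh using ne by (simp add: divide_simps)
  qed
  also have "\<dots> \<le> (n - 1) / n * (A0 * (S - 1) / (S * (l0 - 1))) * (A1 * (S - 1) - 1)"
  proof (rule mult_right_mono[OF mult_mono[OF nh]])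
    show "A0 * (S - 1) / (S * ((1 + d0) * S)) \<le> A0 * (S - 1) / (S * (l0 - 1))"
      using A0pos S1 S0 l01 l0S d00 by (intro divide_left_mono mult_left_mono mult_pos_pos mult_nonneg_nonneg) auto
    show "0 \<le> (n - 1) / n" using h1 nh by simp
    show "0 \<le> A0 * (S - 1) / (S * ((1 + d0) * S))" using A0pos S1 S0 d00 by simp
    show "0 \<le> A1 * (S - 1) - 1" by (rule zpos)
  qed
  finally show "(1 - tau - 7 * a / K)^2 / (1 + d1) \<le>
      (n - 1) / n *
     (((1 - tau) - S / (l0 - 1)) / ((1/(S - 1) - 1/(l0 - 1)) * S * (l0 - 1))) *
     (((1 - tau) - l0 / (l1 - 1)) / (1/(S - 1) - 1/(l1 - 1)) - 1)"
    unfolding yeq zeq using lhs by simp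
qed

theorem lemma3p3:
  "\<exists>f1. nondecr2 f1 \<and>
    (\<forall>(\<tau>::real) (K::real) (r1::nat).
      0 < \<tau> \<and> \<tau> < 1 \<and> 1 \<le> K \<and> 1 - \<tau> - 7 * \<tau> powr (1/4) / K > 0 \<and>
      0 < r1 \<and> 1 / real r1 \<le> f1 \<tau> (1 / K) \<longrightarrow>
      (\<exists>n0::nat. 0 < n0 \<and>
        (\<forall>(t::nat) (n::nat) (VH::'v set) (EH::'e set) (Ve::'e \<Rightarrow> 'v set).
          n \<ge> n0 \<and> hypergraph VH EH Ve \<and> card VH = n \<and> codegree_le VH EH Ve t \<and>
          (\<forall>e\<in>EH. card (Ve e) \<ge> r1) \<longrightarrow>
          (\<exists>R. R \<subseteq> EH \<times> EH \<and> linear_order_on EH R \<and>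
             ((\<forall>e\<in>EH. real (back_deg EH Ve R e) \<le> real t * (1 - \<tau>) * real n) \<or>
              (\<exists>W estar. W \<subseteq> EH \<and> W \<noteq> {} \<and>
                 real (Max ((\<lambda>e. card (Ve e)) ` W))
                   \<le> (1 + 3 * \<tau> powr (1/4) * K ^ 3) * real (Min ((\<lambda>e. card (Ve e)) ` W)) \<and>
                 vol VH Ve W \<ge> real t * (1 - \<tau> - 7 * \<tau> powr (1/4) / K) ^ 2
                                  / (1 + 3 * \<tau> powr (1/4) * K ^ 3) \<and>
                 estar \<in> W \<and> (\<forall>w\<in>W. (w, estar) \<in> R) \<and>
                 (\<forall>f\<in>EH. (estar, f) \<in> R \<and> f \<noteq> estar \<longrightarrow>
                    real (back_deg EH Ve R f) \<le> real t * (1 - \<tau>) * real n) \<and>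
                 (\<forall>e\<in>EH. \<forall>f\<in>EH. (f, e) \<in> R \<and> (e, estar) \<in> R \<longrightarrow>
                    card (Ve f) \<ge> card (Ve e))))))))"
proof (rule exI[of _ "\<lambda>x y. x * y^2 / 100"], intro conjI allI impI)
  show "nondecr2 (\<lambda>x y. x * y^2 / 100)"
    unfolding nondecr2_def
  proof (intro conjI allI impI)
    fix a b a' b' :: real
    assume h: "0 < a \<and> a \<le> a' \<and> a' \<le> 1 \<and> 0 < b \<and> b \<le> b' \<and> b' \<le> 1"
    then have "b^2 \<le> b'^2" by (intro power_mono) auto
    then have "a * b^2 \<le> a' * b'^2" using h by (intro mult_mono) auto
    then show "a * b^2 / 100 \<le> a' * b'^2 / 100" by simp
  next
    fix a b :: real
    assume h: "0 < a \<and> a \<le> 1 \<and> 0 < b \<and> b \<le> 1"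
    then show "0 < a * b^2 / 100" by simp
    have "b^2 \<le> 1" using h by (simp add: power_le_one)
    then have "a * b^2 \<le> 1 * 1" using h by (intro mult_mono) auto
    then show "a * b^2 / 100 \<le> 1" by simp
  qed
next
  fix \<tau> K :: real and r1 :: nat
  assume hyp: "0 < \<tau> \<and> \<tau> < 1 \<and> 1 \<le> K \<and> 1 - \<tau> - 7 * \<tau> powr (1/4) / K > 0 \<and>
      0 < r1 \<and> 1 / real r1 \<le> \<tau> * (1 / K)^2 / 100"
  then have tau0: "0 < \<tau>" and tau1: "\<tau> < 1" and K1: "1 \<le> K"
    and pz0: "1 - \<tau> - 7 * \<tau> powr (1/4) / K > 0" and r10: "0 < r1"
    and r1f: "1 / real r1 \<le> \<tau> * (1 / K)^2 / 100" by auto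
  define a where "a = \<tau> powr (1/4)"
  have a0: "0 < a" unfolding a_def using tau0 by simp
  have a4: "a^4 = \<tau>" unfolding a_def using tau0 by (simp add: powr_realpow[symmetric] powr_powr)
  have a1: "a < 1"
  proof (rule ccontr)
    assume "\<not> a < 1"
    then have "1 \<le> a^4" by (simp add: one_le_power)
    then show False using a4 tau1 by simp
  qed
  have pz: "0 < 1 - a^4 - 7 * a / K" using pz0 a4 unfolding a_def by simp
  have K0: "0 < K" using K1 by simp
  have r1big: "100 * K^2 / a^4 \<le> real r1"
  proof -
    have "1 / real r1 \<le> \<tau> / (100 * K^2)" using r1f by (simp add: power_divide)
    then have "100 * K^2 \<le> \<tau> * real r1" using r10 tau0 K0
      by (simp add: field_simps)
    then show ?thesis using a4 tau0 by (simp add: divide_le_eq mult.commute)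
  qed
  show "\<exists>n0::nat. 0 < n0 \<and>
        (\<forall>(t::nat) (n::nat) (VH::'v set) (EH::'e set) (Ve::'e \<Rightarrow> 'v set).
          n \<ge> n0 \<and> hypergraph VH EH Ve \<and> card VH = n \<and> codegree_le VH EH Ve t \<and>
          (\<forall>e\<in>EH. card (Ve e) \<ge> r1) \<longrightarrow>
          (\<exists>R. R \<subseteq> EH \<times> EH \<and> linear_order_on EH R \<and>
             ((\<forall>e\<in>EH. real (back_deg EH Ve R e) \<le> real t * (1 - \<tau>) * real n) \<or>
              (\<exists>W estar. W \<subseteq> EH \<and> W \<noteq> {} \<and>
                 real (Max ((\<lambda>e. card (Ve e)) ` W))
                   \<le> (1 + 3 * \<tau> powr (1/4) * K ^ 3) * real (Min ((\<lambda>e. card (Ve e)) ` W)) \<and>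
                 vol VH Ve W \<ge> real t * (1 - \<tau> - 7 * \<tau> powr (1/4) / K) ^ 2
                                  / (1 + 3 * \<tau> powr (1/4) * K ^ 3) \<and>
                 estar \<in> W \<and> (\<forall>w\<in>W. (w, estar) \<in> R) \<and>
                 (\<forall>f\<in>EH. (estar, f) \<in> R \<and> f \<noteq> estar \<longrightarrow>
                    real (back_deg EH Ve R f) \<le> real t * (1 - \<tau>) * real n) \<and>
                 (\<forall>e\<in>EH. \<forall>f\<in>EH. (f, e) \<in> R \<and> (e, estar) \<in> R \<longrightarrow>
                    card (Ve f) \<ge> card (Ve e))))))"
  proof (rule exI[of _ 1], intro conjI allI impI)
    show "(0::nat) < 1" by simp
    fix t n :: nat and VH :: "'v set" and EH :: "'e set" and Ve :: "'e \<Rightarrow> 'v set"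
    assume H: "1 \<le> n \<and> hypergraph VH EH Ve \<and> card VH = n \<and> codegree_le VH EH Ve t \<and>
          (\<forall>e\<in>EH. card (Ve e) \<ge> r1)"
    then have hg: "hypergraph VH EH Ve" and nV: "card VH = n" and cd: "codegree_le VH EH Ve t"
      and szr: "\<forall>e\<in>EH. card (Ve e) \<ge> r1" by auto
    have finE: "finite EH" and finV: "finite VH" and subV: "\<forall>e\<in>EH. Ve e \<subseteq> VH"
      using hg unfolding hypergraph_def by auto
    define B where "B = real t * (1 - \<tau>) * real n"
    obtain R C where RC: "R \<subseteq> EH \<times> EH" "linear_order_on EH R" "C \<subseteq> EH"
      "\<forall>x\<in>C. \<forall>y\<in>EH-C. (x,y)\<in>R"
      "\<forall>y\<in>EH-C. real (card {f\<in>nbhd EH Ve y. (f,y)\<in>R}) \<le> B"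
      "\<forall>c\<in>C. B < real (card (nbhd EH Ve c \<inter> C))"
      "\<forall>(f,e)\<in>R. e\<in>C \<longrightarrow> f\<in>C \<longrightarrow> card (Ve e) \<le> card (Ve f)"
      "C \<noteq> {} \<longrightarrow> (\<exists>m\<in>C. \<forall>x\<in>C. (x,m)\<in>R)"
      using core_order[OF finE, of EH Ve B] by (elim exE conjE) blast
    have tr: "trans R" and an: "antisym R"
      using RC(2) unfolding linear_order_on_def partial_order_on_def preorder_on_def by auto
    show "\<exists>R. R \<subseteq> EH \<times> EH \<and> linear_order_on EH R \<and>
             ((\<forall>e\<in>EH. real (back_deg EH Ve R e) \<le> real t * (1 - \<tau>) * real n) \<or>
              (\<exists>W estar. W \<subseteq> EH \<and> W \<noteq> {} \<and>
                 real (Max ((\<lambda>e. card (Ve e)) ` W))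
                   \<le> (1 + 3 * \<tau> powr (1/4) * K ^ 3) * real (Min ((\<lambda>e. card (Ve e)) ` W)) \<and>
                 vol VH Ve W \<ge> real t * (1 - \<tau> - 7 * \<tau> powr (1/4) / K) ^ 2
                                  / (1 + 3 * \<tau> powr (1/4) * K ^ 3) \<and>
                 estar \<in> W \<and> (\<forall>w\<in>W. (w, estar) \<in> R) \<and>
                 (\<forall>f\<in>EH. (estar, f) \<in> R \<and> f \<noteq> estar \<longrightarrow>
                    real (back_deg EH Ve R f) \<le> real t * (1 - \<tau>) * real n) \<and>
                 (\<forall>e\<in>EH. \<forall>f\<in>EH. (f, e) \<in> R \<and> (e, estar) \<in> R \<longrightarrow>
                    card (Ve f) \<ge> card (Ve e))))"
    proof (rule exI[of _ R], intro conjI)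
      show "R \<subseteq> EH \<times> EH" by (rule RC(1))
      show "linear_order_on EH R" by (rule RC(2))
      show "(\<forall>e\<in>EH. real (back_deg EH Ve R e) \<le> real t * (1 - \<tau>) * real n) \<or>
              (\<exists>W estar. W \<subseteq> EH \<and> W \<noteq> {} \<and>
                 real (Max ((\<lambda>e. card (Ve e)) ` W))
                   \<le> (1 + 3 * \<tau> powr (1/4) * K ^ 3) * real (Min ((\<lambda>e. card (Ve e)) ` W)) \<and>
                 vol VH Ve W \<ge> real t * (1 - \<tau> - 7 * \<tau> powr (1/4) / K) ^ 2
                                  / (1 + 3 * \<tau> powr (1/4) * K ^ 3) \<and>
                 estar \<in> W \<and> (\<forall>w\<in>W. (w, estar) \<in> R) \<and>
                 (\<forall>f\<in>EH. (estar, f) \<in> R \<and> f \<noteq> estar \<longrightarrow>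
                    real (back_deg EH Ve R f) \<le> real t * (1 - \<tau>) * real n) \<and>
                 (\<forall>e\<in>EH. \<forall>f\<in>EH. (f, e) \<in> R \<and> (e, estar) \<in> R \<longrightarrow>
                    card (Ve f) \<ge> card (Ve e)))"
      proof (cases "C = {}")
        case True
        then show ?thesis using RC(5) unfolding back_deg_def B_def by auto
      next
        case False
        then obtain m where m: "m \<in> C" "\<forall>x\<in>C. (x,m)\<in>R" using RC(8) by blast
        define s where "s = card (Ve m)"
        define d0 where "d0 = a^3 * K"
        define d1 where "d1 = 3 * a * K^3"
        define W where "W = {g\<in>C. real (card (Ve g)) \<le> (1 + d1) * real s}"
        have d00: "0 < d0" unfolding d0_def using a0 K0 by simp
        have d10: "0 < d1" unfolding d1_def using a0 K0 by simp
        have mE: "m \<in> EH" using m RC(3) by auto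
        have smin: "\<forall>g\<in>C. s \<le> card (Ve g)"
          using m RC(7) unfolding s_def by blast
        have sr1: "real r1 \<le> real s" using szr mE unfolding s_def by simp
        have sbig: "100 * K^2 / a^4 \<le> real s" using r1big sr1 by linarith
        have sV: "s \<le> card VH" unfolding s_def using subV mE finV by (simp add: card_mono)
        have K2: "1 \<le> K^2" using K1 by (simp add: one_le_power)
        have "100 \<le> 100 * K^2 / a^4"
        proof -
          have "a^4 \<le> 1" using a0 a1 by (simp add: power_le_one)
          then show ?thesis using K2 a0 by (simp add: le_divide_eq)
        qed
        then have s100: "100 \<le> real s" using sbig by linarith
        have s2: "2 \<le> s" using s100 by simp
        have WC: "W \<subseteq> C" unfolding W_def by auto
        have mW: "m \<in> W"
        proof -
          have "0 \<le> d1 * real s" using d10 by simp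
          then have "real (card (Ve m)) \<le> (1 + d1) * real s" unfolding s_def by (simp add: distrib_right)
          then show ?thesis unfolding W_def using m by simp
        qed
        have finW: "finite W" by (rule finite_subset[OF _ finE]) (use WC RC(3) in blast)
        have Wmin: "Min ((\<lambda>e. card (Ve e)) ` W) = s"
        proof (rule antisym)
          show "Min ((\<lambda>e. card (Ve e)) ` W) \<le> s" unfolding s_def using mW finW by simp
          show "s \<le> Min ((\<lambda>e. card (Ve e)) ` W)" using mW finW smin WC by (intro Min.boundedI) auto
        qed
        have Wmax: "real (Max ((\<lambda>e. card (Ve e)) ` W)) \<le> (1 + d1) * real s"
        proof -
          have "Max ((\<lambda>e. card (Ve e)) ` W) \<in> (\<lambda>e. card (Ve e)) ` W"
            using mW finW by (intro Max_in) auto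
          then obtain g where "g \<in> W" "Max ((\<lambda>e. card (Ve e)) ` W) = card (Ve g)" by auto
          then show ?thesis unfolding W_def by simp
        qed
        have volb: "real t * (1 - \<tau> - 7 * \<tau> powr (1/4) / K) ^ 2 / (1 + 3 * \<tau> powr (1/4) * K ^ 3)
             \<le> vol VH Ve W"
        proof (cases "t = 0")
          case True
          have "0 \<le> vol VH Ve W" unfolding vol_def by (intro divide_nonneg_nonneg sum_nonneg) auto
          then show ?thesis using True by simp
        next
          case False
          then have tpos: "0 < t" by simp
          have sVr: "real s \<le> real (card VH)" using sV by simp
          note num = numeric[OF a0 a1 K1 pz sbig sVr]
          have core': "\<forall>c\<in>C. real t * (1 - \<tau>) * real (card VH) < real (card (nbhd EH Ve c \<inter> C))"
            using RC(6) nV unfolding B_def by simp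
          have l0: "real s < (1 + d0) * real s" using d00 s100 by simp
          have l1: "real s < (1 + d1) * real s" using d10 s100 by simp
          have taule: "\<tau> \<le> 1" using tau1 by simp
          have ypos: "0 \<le> (1 - \<tau>) - real s / ((1 + d0) * real s - 1)"
            using num(1) unfolding a4 d0_def .
          have zpos: "0 \<le> ((1 - \<tau>) - (1 + d0) * real s / ((1 + d1) * real s - 1)) /
              (1 / (real s - 1) - 1 / ((1 + d1) * real s - 1)) - 1"
            using num(2) unfolding a4 d0_def d1_def .
          have n3: "(1 - \<tau> - 7 * a / K)^2 / (1 + d1) \<le>
              (real (card VH) - 1) / real (card VH) *
             (((1 - \<tau>) - real s / ((1 + d0) * real s - 1)) /
               ((1 / (real s - 1) - 1 / ((1 + d0) * real s - 1)) * real s * ((1 + d0) * real s - 1))) *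
             (((1 - \<tau>) - (1 + d0) * real s / ((1 + d1) * real s - 1)) /
               (1 / (real s - 1) - 1 / ((1 + d1) * real s - 1)) - 1)"
            using num(3) unfolding a4 d0_def d1_def .
          note cv = core_vol[OF hg cd RC(3) m(1) smin s_def s2 core' taule l0 l1 ypos zpos tpos]
          have "real t * ((1 - \<tau> - 7 * a / K)^2 / (1 + d1)) \<le> real t * (
              (real (card VH) - 1) / real (card VH) *
             (((1 - \<tau>) - real s / ((1 + d0) * real s - 1)) /
               ((1 / (real s - 1) - 1 / ((1 + d0) * real s - 1)) * real s * ((1 + d0) * real s - 1))) *
             (((1 - \<tau>) - (1 + d0) * real s / ((1 + d1) * real s - 1)) /
               (1 / (real s - 1) - 1 / ((1 + d1) * real s - 1)) - 1))"
            using n3 by (intro mult_left_mono) auto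
          also have "\<dots> \<le> vol VH Ve W" using cv unfolding W_def by (simp add: mult.assoc)
          finally show ?thesis unfolding d1_def a_def by simp
        qed
        show ?thesis
        proof (rule disjI2, rule exI[of _ W], rule exI[of _ m], intro conjI)
          show "W \<subseteq> EH" using WC RC(3) by auto
          show "W \<noteq> {}" using mW by auto
          show "real (Max ((\<lambda>e. card (Ve e)) ` W))
                   \<le> (1 + 3 * \<tau> powr (1/4) * K ^ 3) * real (Min ((\<lambda>e. card (Ve e)) ` W))"
            using Wmax unfolding Wmin d1_def a_def .
          show "real t * (1 - \<tau> - 7 * \<tau> powr (1/4) / K) ^ 2 / (1 + 3 * \<tau> powr (1/4) * K ^ 3)
             \<le> vol VH Ve W" by (rule volb)
          show "m \<in> W" by (rule mW)
          show "\<forall>w\<in>W. (w, m) \<in> R" using WC m by auto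
          show "\<forall>f\<in>EH. (m, f) \<in> R \<and> f \<noteq> m \<longrightarrow>
                    real (back_deg EH Ve R f) \<le> real t * (1 - \<tau>) * real n"
          proof (intro ballI impI)
            fix f assume f: "f \<in> EH" "(m, f) \<in> R \<and> f \<noteq> m"
            have "f \<notin> C"
            proof
              assume "f \<in> C"
              then have "(f, m) \<in> R" using m by auto
              then show False using f an by (auto dest: antisymD)
            qed
            then show "real (back_deg EH Ve R f) \<le> real t * (1 - \<tau>) * real n"
              using RC(5) f unfolding back_deg_def B_def by auto
          qed
          show "\<forall>e\<in>EH. \<forall>f\<in>EH. (f, e) \<in> R \<and> (e, m) \<in> R \<longrightarrow> card (Ve e) \<le> card (Ve f)"
          proof (intro ballI impI)
            fix e f assume ef: "e \<in> EH" "f \<in> EH" "(f, e) \<in> R \<and> (e, m) \<in> R"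
            have eC: "e \<in> C"
            proof (rule ccontr)
              assume "e \<notin> C"
              then have "(m, e) \<in> R" using RC(4) m ef by auto
              then have "e = m" using ef an by (auto dest: antisymD)
              then show False using \<open>e \<notin> C\<close> m by auto
            qed
            have fC: "f \<in> C"
            proof (rule ccontr)
              assume "f \<notin> C"
              then have "(m, f) \<in> R" using RC(4) m ef by auto
              moreover have "(f, m) \<in> R" using ef tr by (auto dest: transD)
              ultimately have "f = m" using an by (auto dest: antisymD)
              then show False using \<open>f \<notin> C\<close> m by auto
            qed
            show "card (Ve e) \<le> card (Ve f)" using RC(7) ef eC fC by auto
          qed
        qed
      qed
    qed
  qed
qed

end
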